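(* Let $n\ge2$ and $\xi=(\xi^{n-1},\xi_n)\in M_a^{n-1}\times M_s\subset[M(H^\infty(\mathbb{D}))]^n$. Let $\zeta=\{z_k\}_{k\in\mathbb{N}}\subset\mathbb{D}^{n-1}$ be a sequence that is the Cartesian product of interpolating sequences for $H^\infty(\mathbb{D})$ in the coordinate disks, is interpolating for $H^\infty(\mathbb{D}^{n-1})$, and whose closure in $[M(H^\infty(\mathbb{D}))]^{n-1}$ contains $\xi^{n-1}$. Let $R:H^\infty(\mathbb{D}^n)\to H^\infty(\mathbb{D}\times\mathbb{N})$, $R(f)(k):=f(z_k,\cdot)$, and $R^*(\varphi)=\varphi\circ R$. Let $G$ be an analytic disk in $M(H^\infty(\mathbb{D}\times\mathbb{N}))$ such that $R^*(G)$ contains a point $\eta\in F_\xi=\pi_n^{-1}(\xi)$. Then $R^*(G)\subset F_\xi$.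
   Context: $\mathbb{D}$ is the open unit disk; $M(B)$ is the maximal ideal space of a commutative unital Banach algebra $B$ with weak-* topology, $\hat f$ the Gelfand transform. $H^\infty(\mathbb{D}\times\mathbb{N})$ is the algebra of sequences $(g_k)_{k\in\mathbb{N}}$ of functions in $H^\infty(\mathbb{D})$ with $\sup_k\|g_k\|_\infty<\infty$, normed by this supremum. An analytic disk in $M(H^\infty(\mathbb{D}\times\mathbb{N}))$ is the image of a continuous injective map $\tau:\mathbb{D}\to M(H^\infty(\mathbb{D}\times\mathbb{N}))$ with $\hat f\circ\tau\in H^\infty(\mathbb{D})$ for all $f$ in the algebra. Interpolating sequences: every bounded sequence of values is attained by a function of the algebra. $\mathbb{D}^n$ embeds into $M(H^\infty(\mathbb{D}^n))$ by point evaluations with closure $\operatorname{cl}(\mathbb{D}^n)$; $\mathbb{D}^m$ embeds in $[M(H^\infty(\mathbb{D}))]^m$ coordinatewise. $\pi_n(\varphi)=(\varphi\circ\iota_1,\dots,\varphi\circ\iota_n)$ with $\iota_j(f)(z)=f(z_j)$; $F_\xi:=\pi_n^{-1}(\xi)\cap\operatorname{cl}(\mathbb{D}^n)$, which in this setting equals $\pi_n^{-1}(\xi)$. Pseudohyperbolic distance on $M(H^\infty(\mathbb{D}))$: $\rho(\xi,\eta)=\sup\{|\hat f(\eta)|:\hat f(\xi)=0,\|f\|_\infty\le1\}$; Gleason parts are the classes $\{\eta:\rho(\xi,\eta)<1\}$; $M_a$ is the union of non-singleton Gleason parts and $M_s$ its complement. *)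

theory Defs
  imports "HOL-Analysis.Analysis"
begin

definition polydisk :: "nat \<Rightarrow> (nat \<Rightarrow> complex) set" where
  "polydisk n = {z. (\<forall>i<n. z i \<in> ball 0 1) \<and> (\<forall>i. n \<le> i \<longrightarrow> z i = 0)}"

text \<open>H-infinity of the disk; functions are normalised to vanish off the disk,
  so that the algebra operations are pointwise and the unit is the indicator of the disk.\<close>
definition Hinf_disk :: "(complex \<Rightarrow> complex) set" where
  "Hinf_disk = {f. f holomorphic_on ball 0 1 \<and> bounded (f ` ball 0 1)
                  \<and> (\<forall>w. w \<notin> ball 0 1 \<longrightarrow> f w = 0)}"

definition Hinf_poly :: "nat \<Rightarrow> ((nat \<Rightarrow> complex) \<Rightarrow> complex) set" where
  "Hinf_poly n = {f. continuous_on (polydisk n) f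
        \<and> (\<forall>z\<in>polydisk n. \<forall>i<n. (\<lambda>w. f (z(i := w))) holomorphic_on ball 0 1)
        \<and> bounded (f ` polydisk n)
        \<and> (\<forall>z. z \<notin> polydisk n \<longrightarrow> f z = 0)}"

text \<open>H-infinity(D x N): a sequence (g_k) is encoded as g(k,w) = g_k(w).\<close>
definition Hinf_DN :: "(nat \<times> complex \<Rightarrow> complex) set" where
  "Hinf_DN = {g. (\<forall>k. (\<lambda>w. g (k, w)) holomorphic_on ball 0 1)
        \<and> bounded (g ` (UNIV \<times> ball 0 1))
        \<and> (\<forall>k w. w \<notin> ball 0 1 \<longrightarrow> g (k, w) = 0)}"

text \<open>Maximal ideal space of a function algebra A (pointwise operations) with unit u:
  the nonzero multiplicative linear functionals (phi u = 1), made extensional.\<close>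
definition characters :: "('a \<Rightarrow> complex) set \<Rightarrow> ('a \<Rightarrow> complex) \<Rightarrow> (('a \<Rightarrow> complex) \<Rightarrow> complex) set" where
  "characters A u = {\<phi>.
      (\<forall>f\<in>A. \<forall>g\<in>A. \<phi> (\<lambda>x. f x + g x) = \<phi> f + \<phi> g \<and> \<phi> (\<lambda>x. f x * g x) = \<phi> f * \<phi> g)
    \<and> (\<forall>c. \<forall>f\<in>A. \<phi> (\<lambda>x. c * f x) = c * \<phi> f)
    \<and> \<phi> u = 1
    \<and> (\<forall>f. f \<notin> A \<longrightarrow> \<phi> f = 0)}"

definition M_disk :: "((complex \<Rightarrow> complex) \<Rightarrow> complex) set" where
  "M_disk = characters Hinf_disk (indicator (ball 0 1))"

definition M_poly :: "nat \<Rightarrow> (((nat \<Rightarrow> complex) \<Rightarrow> complex) \<Rightarrow> complex) set" where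
  "M_poly n = characters (Hinf_poly n) (indicator (polydisk n))"

definition M_DN :: "((nat \<times> complex \<Rightarrow> complex) \<Rightarrow> complex) set" where
  "M_DN = characters Hinf_DN (indicator (UNIV \<times> ball 0 1))"

definition weakstar :: "('a \<Rightarrow> complex) set \<Rightarrow> (('a \<Rightarrow> complex) \<Rightarrow> complex) set
                        \<Rightarrow> (('a \<Rightarrow> complex) \<Rightarrow> complex) topology" where
  "weakstar A M = subtopology
     (topology_generated_by {{\<phi>. \<phi> f \<in> U} | f U. f \<in> A \<and> open U}) M"

definition analytic_disk :: "('a \<Rightarrow> complex) set \<Rightarrow> ('a \<Rightarrow> complex)
                             \<Rightarrow> (('a \<Rightarrow> complex) \<Rightarrow> complex) set \<Rightarrow> bool" where
  "analytic_disk A u G \<longleftrightarrow> (\<exists>\<tau>.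
       \<tau> ` ball 0 1 \<subseteq> characters A u
     \<and> inj_on \<tau> (ball 0 1)
     \<and> continuous_map (top_of_set (ball 0 1)) (weakstar A (characters A u)) \<tau>
     \<and> (\<forall>f\<in>A. (\<lambda>z. \<tau> z f) holomorphic_on ball 0 1 \<and> bounded ((\<lambda>z. \<tau> z f) ` ball 0 1))
     \<and> G = \<tau> ` ball 0 1)"

definition rho :: "((complex \<Rightarrow> complex) \<Rightarrow> complex) \<Rightarrow> ((complex \<Rightarrow> complex) \<Rightarrow> complex) \<Rightarrow> real" where
  "rho \<xi> \<eta> = Sup {cmod (\<eta> f) | f. f \<in> Hinf_disk \<and> \<xi> f = 0 \<and> (\<forall>w\<in>ball 0 1. cmod (f w) \<le> 1)}"

definition gleason_part :: "((complex \<Rightarrow> complex) \<Rightarrow> complex) \<Rightarrow> ((complex \<Rightarrow> complex) \<Rightarrow> complex) set" where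
  "gleason_part \<xi> = {\<eta> \<in> M_disk. rho \<xi> \<eta> < 1}"

definition M_a :: "((complex \<Rightarrow> complex) \<Rightarrow> complex) set" where
  "M_a = {\<xi> \<in> M_disk. \<exists>\<eta>\<in>gleason_part \<xi>. \<eta> \<noteq> \<xi>}"

definition M_s :: "((complex \<Rightarrow> complex) \<Rightarrow> complex) set" where
  "M_s = M_disk - M_a"

definition ev_disk :: "complex \<Rightarrow> (complex \<Rightarrow> complex) \<Rightarrow> complex" where
  "ev_disk a = (\<lambda>f. if f \<in> Hinf_disk then f a else 0)"

definition interpolating_disk :: "(nat \<Rightarrow> complex) \<Rightarrow> bool" where
  "interpolating_disk a \<longleftrightarrow> (\<forall>k. a k \<in> ball 0 1) \<and>
     (\<forall>w::nat \<Rightarrow> complex. bounded (range w) \<longrightarrow> (\<exists>f\<in>Hinf_disk. \<forall>k. f (a k) = w k))"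

definition interpolating_poly :: "nat \<Rightarrow> (nat \<Rightarrow> nat \<Rightarrow> complex) \<Rightarrow> bool" where
  "interpolating_poly m z \<longleftrightarrow> (\<forall>k. z k \<in> polydisk m) \<and>
     (\<forall>w::nat \<Rightarrow> complex. bounded (range w) \<longrightarrow> (\<exists>f\<in>Hinf_poly m. \<forall>k. f (z k) = w k))"

text \<open>iota_j (coordinates indexed 0..n-1) and pi_n; F_xi = pi_n^{-1}(xi).\<close>
definition iota :: "nat \<Rightarrow> nat \<Rightarrow> (complex \<Rightarrow> complex) \<Rightarrow> (nat \<Rightarrow> complex) \<Rightarrow> complex" where
  "iota n j f = (\<lambda>z. if z \<in> polydisk n then f (z j) else 0)"

definition pi_n :: "nat \<Rightarrow> (((nat \<Rightarrow> complex) \<Rightarrow> complex) \<Rightarrow> complex)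
                    \<Rightarrow> nat \<Rightarrow> (complex \<Rightarrow> complex) \<Rightarrow> complex" where
  "pi_n n \<phi> = (\<lambda>j\<in>{..<n}. \<lambda>f. if f \<in> Hinf_disk then \<phi> (iota n j f) else 0)"

definition fiber :: "nat \<Rightarrow> (nat \<Rightarrow> (complex \<Rightarrow> complex) \<Rightarrow> complex)
                     \<Rightarrow> (((nat \<Rightarrow> complex) \<Rightarrow> complex) \<Rightarrow> complex) set" where
  "fiber n \<xi> = {\<phi> \<in> M_poly n. pi_n n \<phi> = \<xi>}"

definition Rop :: "nat \<Rightarrow> (nat \<Rightarrow> nat \<Rightarrow> complex) \<Rightarrow> ((nat \<Rightarrow> complex) \<Rightarrow> complex)
                   \<Rightarrow> nat \<times> complex \<Rightarrow> complex" where
  "Rop n z f = (\<lambda>(k, w). if w \<in> ball 0 1 then f ((z k)(n - 1 := w)) else 0)"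

definition Rstar :: "nat \<Rightarrow> (nat \<Rightarrow> nat \<Rightarrow> complex) \<Rightarrow> ((nat \<times> complex \<Rightarrow> complex) \<Rightarrow> complex)
                     \<Rightarrow> ((nat \<Rightarrow> complex) \<Rightarrow> complex) \<Rightarrow> complex" where
  "Rstar n z \<phi> = (\<lambda>f. if f \<in> Hinf_poly n then \<phi> (Rop n z f) else 0)"

end

theory Submission
  imports Defs "HOL-Complex_Analysis.Complex_Analysis"
begin


abbreviation oneDN :: "nat \<times> complex \<Rightarrow> complex" where
  "oneDN \<equiv> indicator (UNIV \<times> ball 0 1)"

lemma oneDN_eq: "oneDN (k, w) = (if w \<in> ball 0 1 then 1 else 0)"
  by (simp add: indicator_def)

lemma DN_memI:
  assumes "\<And>k. (\<lambda>w. g (k, w)) holomorphic_on ball 0 1"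
    and "\<And>k w. w \<in> ball 0 1 \<Longrightarrow> cmod (g (k, w)) \<le> M"
    and "\<And>k w. w \<notin> ball 0 1 \<Longrightarrow> g (k, w) = 0"
  shows "g \<in> Hinf_DN"
  unfolding Hinf_DN_def bounded_iff using assms by fastforce

lemma DN_memD:
  assumes "g \<in> Hinf_DN"
  obtains M where "\<And>k w. cmod (g (k, w)) \<le> M"
proof -
  from assms obtain M where M: "\<And>x. x \<in> UNIV \<times> ball 0 1 \<Longrightarrow> cmod (g x) \<le> M"
    unfolding Hinf_DN_def bounded_iff by fastforce
  have "cmod (g (k, w)) \<le> max M 0" for k w
  proof (cases "w \<in> ball 0 1")
    case True then show ?thesis using M[of "(k,w)"] by simp
  next
    case False then show ?thesis using assms unfolding Hinf_DN_def by simp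
  qed
  then show ?thesis using that by blast
qed

lemma DN_hol: "g \<in> Hinf_DN \<Longrightarrow> (\<lambda>w. g (k, w)) holomorphic_on ball 0 1"
  unfolding Hinf_DN_def by blast

lemma DN_zero: "g \<in> Hinf_DN \<Longrightarrow> w \<notin> ball 0 1 \<Longrightarrow> g (k, w) = 0"
  unfolding Hinf_DN_def by blast

lemma DN_add: "f \<in> Hinf_DN \<Longrightarrow> g \<in> Hinf_DN \<Longrightarrow> (\<lambda>x. f x + g x) \<in> Hinf_DN"
proof -
  assume f: "f \<in> Hinf_DN" and g: "g \<in> Hinf_DN"
  obtain A where A: "\<And>k w. cmod (f (k, w)) \<le> A" using DN_memD[OF f] by blast
  obtain B where B: "\<And>k w. cmod (g (k, w)) \<le> B" using DN_memD[OF g] by blast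
  show ?thesis
  proof (rule DN_memI[where M="A+B"])
    show "(\<lambda>w. f (k, w) + g (k, w)) holomorphic_on ball 0 1" for k
      using DN_hol[OF f] DN_hol[OF g] by (intro holomorphic_on_add)
    show "cmod (f (k, w) + g (k, w)) \<le> A + B" for k w
      using A[of k w] B[of k w] norm_triangle_ineq[of "f (k,w)" "g (k,w)"] by linarith
    show "w \<notin> ball 0 1 \<Longrightarrow> f (k, w) + g (k, w) = 0" for k w
      using DN_zero[OF f] DN_zero[OF g] by simp
  qed
qed

lemma DN_mult: "f \<in> Hinf_DN \<Longrightarrow> g \<in> Hinf_DN \<Longrightarrow> (\<lambda>x. f x * g x) \<in> Hinf_DN"
proof -
  assume f: "f \<in> Hinf_DN" and g: "g \<in> Hinf_DN"
  obtain A where A: "\<And>k w. cmod (f (k, w)) \<le> A" using DN_memD[OF f] by blast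
  obtain B where B: "\<And>k w. cmod (g (k, w)) \<le> B" using DN_memD[OF g] by blast
  show ?thesis
  proof (rule DN_memI[where M="A*B"])
    show "(\<lambda>w. f (k, w) * g (k, w)) holomorphic_on ball 0 1" for k
      using DN_hol[OF f] DN_hol[OF g] by (intro holomorphic_on_mult)
    show "cmod (f (k, w) * g (k, w)) \<le> A * B" for k w
      using A[of k w] B[of k w] by (simp add: norm_mult mult_mono')
    show "w \<notin> ball 0 1 \<Longrightarrow> f (k, w) * g (k, w) = 0" for k w
      using DN_zero[OF f] by simp
  qed
qed

lemma DN_one: "oneDN \<in> Hinf_DN"
proof (rule DN_memI[where M=1])
  show "(\<lambda>w. oneDN (k, w)) holomorphic_on ball 0 1" for k
    by (rule holomorphic_transform[of "\<lambda>w. 1"]) (auto simp: oneDN_eq)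
qed (auto simp: oneDN_eq)

lemma DN_smult: "f \<in> Hinf_DN \<Longrightarrow> (\<lambda>x. c * f x) \<in> Hinf_DN"
proof -
  assume f: "f \<in> Hinf_DN"
  have "(\<lambda>x. c) \<in> Hinf_DN \<or> True" by simp
  obtain A where A: "\<And>k w. cmod (f (k, w)) \<le> A" using DN_memD[OF f] by blast
  show ?thesis
  proof (rule DN_memI[where M="cmod c*A"])
    show "(\<lambda>w. c * f (k, w)) holomorphic_on ball 0 1" for k
      using DN_hol[OF f] by (intro holomorphic_on_mult holomorphic_on_const)
    show "cmod (c * f (k, w)) \<le> cmod c * A" for k w
      using A[of k w] by (simp add: norm_mult mult_left_mono)
    show "w \<notin> ball 0 1 \<Longrightarrow> c * f (k, w) = 0" for k w
      using DN_zero[OF f] by simp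
  qed
qed

lemma ch_add: "\<phi> \<in> characters A u \<Longrightarrow> f \<in> A \<Longrightarrow> g \<in> A \<Longrightarrow> \<phi> (\<lambda>x. f x + g x) = \<phi> f + \<phi> g"
  and ch_mult: "\<phi> \<in> characters A u \<Longrightarrow> f \<in> A \<Longrightarrow> g \<in> A \<Longrightarrow> \<phi> (\<lambda>x. f x * g x) = \<phi> f * \<phi> g"
  and ch_smult: "\<phi> \<in> characters A u \<Longrightarrow> f \<in> A \<Longrightarrow> \<phi> (\<lambda>x. c * f x) = c * \<phi> f"
  and ch_one: "\<phi> \<in> characters A u \<Longrightarrow> \<phi> u = 1"
  and ch_out: "\<phi> \<in> characters A u \<Longrightarrow> f \<notin> A \<Longrightarrow> \<phi> f = 0"
  unfolding characters_def by auto

lemma ch_inv: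
  assumes phi: "\<phi> \<in> characters Hinf_DN oneDN" and h: "h \<in> Hinf_DN" and d: "0 < d"
    and low: "\<And>k w. w \<in> ball 0 1 \<Longrightarrow> d \<le> cmod (h (k, w))"
  shows "\<phi> h \<noteq> 0"
proof -
  define hi where "hi = (\<lambda>x. if snd x \<in> ball 0 1 then 1 / h x else 0)"
  have hnz: "w \<in> ball 0 1 \<Longrightarrow> h (k, w) \<noteq> 0" for k w using low[of w k] d by auto
  have hi: "hi \<in> Hinf_DN"
  proof (rule DN_memI[where M="1/d"])
    show "(\<lambda>w. hi (k, w)) holomorphic_on ball 0 1" for k
      by (rule holomorphic_transform[of "\<lambda>w. 1 / h (k, w)"])
         (auto simp: hi_def hnz intro!: holomorphic_intros DN_hol[OF h])
    show "cmod (hi (k, w)) \<le> 1 / d" if "w \<in> ball 0 1" for k w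
      using that low[OF that, of k] d by (simp add: hi_def norm_divide divide_simps)
  qed (auto simp: hi_def)
  have "(\<lambda>x. h x * hi x) = oneDN"
  proof
    fix x :: "nat \<times> complex" obtain k w where x: "x = (k, w)" by fastforce
    show "h x * hi x = oneDN x" using hnz[of w k] by (auto simp: x hi_def oneDN_eq)
  qed
  then have "\<phi> h * \<phi> hi = 1" using ch_mult[OF phi h hi] ch_one[OF phi] by simp
  then show ?thesis by auto
qed

lemma ch_bound:
  assumes phi: "\<phi> \<in> characters Hinf_DN oneDN" and h: "h \<in> Hinf_DN"
    and up: "\<And>k w. w \<in> ball 0 1 \<Longrightarrow> cmod (h (k, w)) \<le> M"
  shows "cmod (\<phi> h) \<le> M"
proof (rule ccontr)
  assume "\<not> cmod (\<phi> h) \<le> M"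
  define \<mu> where "\<mu> = \<phi> h"
  have gt: "M < cmod \<mu>" using \<open>\<not> _\<close> by (simp add: \<mu>_def)
  define h' where "h' = (\<lambda>x. h x + (- \<mu>) * oneDN x)"
  have m1: "(\<lambda>x. (- \<mu>) * oneDN x) \<in> Hinf_DN" by (rule DN_smult[OF DN_one])
  have h': "h' \<in> Hinf_DN" unfolding h'_def by (rule DN_add[OF h m1])
  have "\<phi> h' = \<phi> h + \<phi> (\<lambda>x. (- \<mu>) * oneDN x)"
    unfolding h'_def by (rule ch_add[OF phi h m1])
  also have "\<phi> (\<lambda>x. (- \<mu>) * oneDN x) = (- \<mu>) * \<phi> oneDN" by (rule ch_smult[OF phi DN_one])
  finally have z: "\<phi> h' = 0" by (simp add: \<mu>_def ch_one[OF phi])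
  have "cmod \<mu> - M \<le> cmod (h' (k, w))" if "w \<in> ball 0 1" for k w
  proof -
    have "h' (k, w) = h (k, w) - \<mu>" using that by (simp add: h'_def oneDN_eq)
    moreover have "cmod \<mu> - cmod (h (k,w)) \<le> cmod (h (k, w) - \<mu>)"
      by (metis norm_minus_commute norm_triangle_ineq2)
    ultimately show ?thesis using up[OF that, of k] by simp
  qed
  then have "\<phi> h' \<noteq> 0" using ch_inv[OF phi h', of "cmod \<mu> - M"] gt by auto
  with z show False by simp
qed



lemma ch_idem:
  assumes phi: "\<phi> \<in> characters Hinf_DN oneDN" and e: "e \<in> Hinf_DN" and idem: "\<And>x. e x * e x = e x"
  shows "\<phi> e = 0 \<or> \<phi> e = 1"
proof -
  have "(\<lambda>x. e x * e x) = e" using idem by auto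
  then have "\<phi> e = \<phi> e * \<phi> e" using ch_mult[OF phi e e] by simp
  then show ?thesis by (metis mult_cancel_left1 mult_cancel_right2)
qed

lemma idem_const:
  assumes Tch: "\<And>\<mu>. \<mu> \<in> ball 0 1 \<Longrightarrow> \<tau> \<mu> \<in> characters Hinf_DN oneDN"
    and Thol: "\<And>h. h \<in> Hinf_DN \<Longrightarrow> (\<lambda>\<mu>. \<tau> \<mu> h) holomorphic_on ball 0 1"
    and e: "e \<in> Hinf_DN" and idem: "\<And>x. e x * e x = e x"
    and l: "l \<in> ball 0 1" and l0: "l0 \<in> ball 0 1"
  shows "\<tau> l e = \<tau> l0 e"
proof -
  have v: "\<tau> \<mu> e = 0 \<or> \<tau> \<mu> e = 1" if "\<mu> \<in> ball 0 1" for \<mu>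
    using ch_idem[OF Tch[OF that] e idem] .
  have "(\<lambda>\<mu>. \<tau> \<mu> e) constant_on ball 0 1"
  proof (rule continuous_discrete_range_constant)
    show "connected (ball (0::complex) 1)" by simp
    show "continuous_on (ball 0 1) (\<lambda>\<mu>. \<tau> \<mu> e)"
      by (rule holomorphic_on_imp_continuous_on[OF Thol[OF e]])
    show "\<exists>d>0. \<forall>y. y \<in> ball 0 1 \<and> \<tau> y e \<noteq> \<tau> x e \<longrightarrow> d \<le> cmod (\<tau> y e - \<tau> x e)"
      if "x \<in> ball 0 1" for x
    proof (intro exI[of _ 1] conjI allI impI)
      fix y assume y: "y \<in> ball 0 1 \<and> \<tau> y e \<noteq> \<tau> x e"
      then show "1 \<le> cmod (\<tau> y e - \<tau> x e)" using v[OF that] v[of y] by auto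
    qed simp
  qed
  then show ?thesis using l l0 unfolding constant_on_def by metis
qed

definition seqfun :: "(nat \<Rightarrow> complex) \<Rightarrow> nat \<times> complex \<Rightarrow> complex" where
  "seqfun c = (\<lambda>x. if snd x \<in> ball 0 1 then c (fst x) else 0)"

lemma seqfun_DN:
  assumes "\<And>k. cmod (c k) \<le> B" shows "seqfun c \<in> Hinf_DN"
proof (rule DN_memI[where M=B])
  show "(\<lambda>w. seqfun c (k, w)) holomorphic_on ball 0 1" for k
    by (rule holomorphic_transform[of "\<lambda>w. c k"]) (auto simp: seqfun_def)
qed (auto simp: seqfun_def assms)

lemma ind_DN: "indicator (A \<times> ball 0 1) \<in> Hinf_DN"
proof (rule DN_memI[where M=1])
  show "(\<lambda>w. indicator (A \<times> ball 0 1) (k, w)) holomorphic_on ball 0 1" for k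
    by (rule holomorphic_transform[of "\<lambda>w. if k \<in> A then 1 else 0"]) (auto simp: indicator_def)
qed (auto simp: indicator_def)

lemma seq_key:
  assumes phi: "\<phi> \<in> characters Hinf_DN oneDN" and cB: "\<And>k. cmod (c k) \<le> B"
    and eps: "0 < \<epsilon>"
  shows "\<phi> (indicator ({k. cmod (c k - \<phi> (seqfun c)) < \<epsilon>} \<times> ball 0 1)) = 1"
proof -
  define \<nu> where "\<nu> = \<phi> (seqfun c)"
  define A where "A = {k. cmod (c k - \<nu>) < \<epsilon>}"
  define E where "E = (indicator (A \<times> ball 0 1) :: nat \<times> complex \<Rightarrow> complex)"
  have C: "seqfun c \<in> Hinf_DN" by (rule seqfun_DN[OF cB])
  have E: "E \<in> Hinf_DN" unfolding E_def by (rule ind_DN)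
  define D where "D = (\<lambda>x. seqfun c x + (- \<nu>) * oneDN x)"
  define F where "F = (\<lambda>x. oneDN x + (- 1) * E x)"
  define P where "P = (\<lambda>x. D x * F x)"
  define H where "H = (\<lambda>x. P x + E x)"
  have m1: "(\<lambda>x. (- \<nu>) * oneDN x) \<in> Hinf_DN" by (rule DN_smult[OF DN_one])
  have m2: "(\<lambda>x. (- 1) * E x) \<in> Hinf_DN" by (rule DN_smult[OF E])
  have D: "D \<in> Hinf_DN" unfolding D_def by (rule DN_add[OF C m1])
  have F: "F \<in> Hinf_DN" unfolding F_def by (rule DN_add[OF DN_one m2])
  have P: "P \<in> Hinf_DN" unfolding P_def by (rule DN_mult[OF D F])
  have H: "H \<in> Hinf_DN" unfolding H_def by (rule DN_add[OF P E])
  have "\<phi> D = \<phi> (seqfun c) + \<phi> (\<lambda>x. (- \<nu>) * oneDN x)"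
    unfolding D_def by (rule ch_add[OF phi C m1])
  also have "\<phi> (\<lambda>x. (- \<nu>) * oneDN x) = (- \<nu>) * \<phi> oneDN" by (rule ch_smult[OF phi DN_one])
  finally have D0: "\<phi> D = 0" by (simp add: \<nu>_def ch_one[OF phi])
  have "\<phi> H = \<phi> P + \<phi> E" unfolding H_def by (rule ch_add[OF phi P E])
  also have "\<phi> P = \<phi> D * \<phi> F" unfolding P_def by (rule ch_mult[OF phi D F])
  finally have HE: "\<phi> H = \<phi> E" using D0 by simp
  have "min 1 \<epsilon> \<le> cmod (H (k, w))" if "w \<in> ball 0 1" for k w
  proof (cases "k \<in> A")
    case True
    then show ?thesis using that by (simp add: H_def P_def F_def E_def indicator_def)
  next
    case False
    then have "H (k, w) = c k - \<nu>" using that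
      by (simp add: H_def P_def F_def E_def D_def seqfun_def indicator_def)
    then show ?thesis using False by (simp add: A_def)
  qed
  then have "\<phi> H \<noteq> 0" using ch_inv[OF phi H, of "min 1 \<epsilon>"] eps by auto
  then have "\<phi> E \<noteq> 0" using HE by simp
  moreover have "\<phi> E = 0 \<or> \<phi> E = 1"
    by (rule ch_idem[OF phi E]) (simp add: E_def indicator_def)
  ultimately show ?thesis by (simp add: E_def A_def \<nu>_def)
qed

lemma seq_const:
  assumes Tch: "\<And>\<mu>. \<mu> \<in> ball 0 1 \<Longrightarrow> \<tau> \<mu> \<in> characters Hinf_DN oneDN"
    and Thol: "\<And>h. h \<in> Hinf_DN \<Longrightarrow> (\<lambda>\<mu>. \<tau> \<mu> h) holomorphic_on ball 0 1"
    and cB: "\<And>k. cmod (c k) \<le> B"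
    and l: "l \<in> ball 0 1" and l0: "l0 \<in> ball 0 1"
  shows "\<tau> l (seqfun c) = \<tau> l0 (seqfun c)"
proof (rule ccontr)
  assume ne: "\<tau> l (seqfun c) \<noteq> \<tau> l0 (seqfun c)"
  define \<nu> where "\<nu> = \<tau> l (seqfun c)"
  define \<nu>0 where "\<nu>0 = \<tau> l0 (seqfun c)"
  define \<epsilon> where "\<epsilon> = cmod (\<nu> - \<nu>0) / 2"
  have eps: "0 < \<epsilon>" using ne by (simp add: \<epsilon>_def \<nu>_def \<nu>0_def)
  define EA where "EA = (indicator ({k. cmod (c k - \<nu>0) < \<epsilon>} \<times> ball 0 1) :: nat \<times> complex \<Rightarrow> complex)"
  define EB where "EB = (indicator ({k. cmod (c k - \<nu>) < \<epsilon>} \<times> ball 0 1) :: nat \<times> complex \<Rightarrow> complex)"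
  have EA: "EA \<in> Hinf_DN" and EB: "EB \<in> Hinf_DN" unfolding EA_def EB_def by (rule ind_DN)+
  have "\<tau> l0 EA = 1" unfolding EA_def \<nu>0_def by (rule seq_key[OF Tch[OF l0] cB eps])
  moreover have "\<tau> l EA = \<tau> l0 EA"
    by (rule idem_const[OF Tch Thol EA _ l l0]) (auto simp: EA_def indicator_def)
  ultimately have a: "\<tau> l EA = 1" by simp
  have b: "\<tau> l EB = 1" unfolding EB_def \<nu>_def by (rule seq_key[OF Tch[OF l] cB eps])
  have disj: "(\<lambda>x. EA x * EB x) = (\<lambda>x. 0 * oneDN x)"
  proof
    fix x :: "nat \<times> complex" obtain k w where x: "x = (k, w)" by fastforce
    have "\<not> (cmod (c k - \<nu>0) < \<epsilon> \<and> cmod (c k - \<nu>) < \<epsilon>)"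
    proof
      assume h: "cmod (c k - \<nu>0) < \<epsilon> \<and> cmod (c k - \<nu>) < \<epsilon>"
      have "cmod (\<nu> - \<nu>0) \<le> cmod (c k - \<nu>0) + cmod (c k - \<nu>)"
        by (metis add.commute diff_add_cancel norm_minus_commute norm_triangle_ineq4 diff_diff_eq2)
      with h show False by (simp add: \<epsilon>_def)
    qed
    then show "EA x * EB x = 0 * oneDN x" by (auto simp: x EA_def EB_def indicator_def)
  qed
  have "\<tau> l EA * \<tau> l EB = \<tau> l (\<lambda>x. 0 * oneDN x)"
    using ch_mult[OF Tch[OF l] EA EB] disj by simp
  also have "\<dots> = 0" using ch_smult[OF Tch[OF l] DN_one, of 0] by simp
  finally show False using a b by simp
qed



definition psiC :: "((nat \<times> complex \<Rightarrow> complex) \<Rightarrow> complex) \<Rightarrow> (complex \<Rightarrow> complex) \<Rightarrow> complex" where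
  "psiC \<phi> = (\<lambda>f. if f \<in> Hinf_disk then \<phi> (\<lambda>x. f (snd x)) else 0)"

lemma disk_memD:
  assumes "f \<in> Hinf_disk"
  obtains M where "\<And>w. cmod (f w) \<le> M"
proof -
  from assms obtain M where M: "\<And>x. x \<in> ball 0 1 \<Longrightarrow> cmod (f x) \<le> M"
    unfolding Hinf_disk_def bounded_iff by fastforce
  have "cmod (f w) \<le> max M 0" for w
  proof (cases "w \<in> ball 0 1")
    case True then show ?thesis using M[of w] by simp
  next
    case False then show ?thesis using assms unfolding Hinf_disk_def by simp
  qed
  then show ?thesis using that by blast
qed

lemma disk_memI:
  assumes "f holomorphic_on ball 0 1" "\<And>w. cmod (f w) \<le> M" "\<And>w. w \<notin> ball 0 1 \<Longrightarrow> f w = 0"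
  shows "f \<in> Hinf_disk"
  unfolding Hinf_disk_def bounded_iff using assms by fastforce

lemma disk_hol: "f \<in> Hinf_disk \<Longrightarrow> f holomorphic_on ball 0 1"
  and disk_zero: "f \<in> Hinf_disk \<Longrightarrow> w \<notin> ball 0 1 \<Longrightarrow> f w = 0"
  unfolding Hinf_disk_def by auto

lemma disk_DN: "f \<in> Hinf_disk \<Longrightarrow> (\<lambda>x. f (snd x)) \<in> Hinf_DN"
proof -
  assume f: "f \<in> Hinf_disk"
  obtain M where M: "\<And>w. cmod (f w) \<le> M" using disk_memD[OF f] by blast
  show ?thesis by (rule DN_memI[where M=M]) (auto simp: M disk_hol[OF f] disk_zero[OF f])
qed

lemma disk_add: "f \<in> Hinf_disk \<Longrightarrow> g \<in> Hinf_disk \<Longrightarrow> (\<lambda>x. f x + g x) \<in> Hinf_disk"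
proof -
  assume f: "f \<in> Hinf_disk" and g: "g \<in> Hinf_disk"
  obtain A where A: "\<And>w. cmod (f w) \<le> A" using disk_memD[OF f] by blast
  obtain B where B: "\<And>w. cmod (g w) \<le> B" using disk_memD[OF g] by blast
  show ?thesis
  proof (rule disk_memI[where M="A+B"])
    show "(\<lambda>w. f w + g w) holomorphic_on ball 0 1"
      using disk_hol[OF f] disk_hol[OF g] by (intro holomorphic_on_add)
    show "cmod (f w + g w) \<le> A + B" for w
      using A[of w] B[of w] norm_triangle_ineq[of "f w" "g w"] by linarith
  qed (simp add: disk_zero[OF f] disk_zero[OF g])
qed

lemma disk_mult: "f \<in> Hinf_disk \<Longrightarrow> g \<in> Hinf_disk \<Longrightarrow> (\<lambda>x. f x * g x) \<in> Hinf_disk"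
proof -
  assume f: "f \<in> Hinf_disk" and g: "g \<in> Hinf_disk"
  obtain A where A: "\<And>w. cmod (f w) \<le> A" using disk_memD[OF f] by blast
  obtain B where B: "\<And>w. cmod (g w) \<le> B" using disk_memD[OF g] by blast
  show ?thesis
  proof (rule disk_memI[where M="A*B"])
    show "(\<lambda>w. f w * g w) holomorphic_on ball 0 1"
      using disk_hol[OF f] disk_hol[OF g] by (intro holomorphic_on_mult)
    show "cmod (f w * g w) \<le> A * B" for w
      using A[of w] B[of w] by (simp add: norm_mult mult_mono')
  qed (simp add: disk_zero[OF f])
qed

lemma disk_smult: "f \<in> Hinf_disk \<Longrightarrow> (\<lambda>x. c * f x) \<in> Hinf_disk"
proof -
  assume f: "f \<in> Hinf_disk"
  obtain A where A: "\<And>w. cmod (f w) \<le> A" using disk_memD[OF f] by blast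
  show ?thesis
  proof (rule disk_memI[where M="cmod c*A"])
    show "(\<lambda>w. c * f w) holomorphic_on ball 0 1"
      using disk_hol[OF f] by (intro holomorphic_on_mult holomorphic_on_const)
    show "cmod (c * f w) \<le> cmod c * A" for w
      using A[of w] by (simp add: norm_mult mult_left_mono)
  qed (simp add: disk_zero[OF f])
qed

lemma disk_zero_fun: "(\<lambda>w. 0) \<in> Hinf_disk"
  by (rule disk_memI[where M=0]) auto

lemma psiC_M:
  assumes phi: "\<phi> \<in> characters Hinf_DN oneDN"
  shows "psiC \<phi> \<in> M_disk"
  unfolding M_disk_def characters_def
proof (intro CollectI conjI ballI allI impI)
  fix f g assume f: "f \<in> Hinf_disk" and g: "g \<in> Hinf_disk"
  show "psiC \<phi> (\<lambda>x. f x + g x) = psiC \<phi> f + psiC \<phi> g"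
    using ch_add[OF phi disk_DN[OF f] disk_DN[OF g]] f g disk_add[OF f g] by (simp add: psiC_def)
  show "psiC \<phi> (\<lambda>x. f x * g x) = psiC \<phi> f * psiC \<phi> g"
    using ch_mult[OF phi disk_DN[OF f] disk_DN[OF g]] f g disk_mult[OF f g] by (simp add: psiC_def)
next
  fix c f assume f: "f \<in> Hinf_disk"
  show "psiC \<phi> (\<lambda>x. c * f x) = c * psiC \<phi> f"
    using ch_smult[OF phi disk_DN[OF f]] f disk_smult[OF f] by (simp add: psiC_def)
next
  have i: "indicator (ball 0 1) \<in> Hinf_disk"
  proof (rule disk_memI[where M=1])
    show "indicator (ball 0 1) holomorphic_on ball (0::complex) 1"
      by (rule holomorphic_transform[of "\<lambda>w. 1"]) auto
  qed (auto simp: indicator_def)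
  have "(\<lambda>x. indicator (ball 0 1) (snd x) :: complex) = oneDN"
    by (auto simp: indicator_def)
  then show "psiC \<phi> (indicator (ball 0 1)) = 1" using i ch_one[OF phi] by (simp add: psiC_def)
next
  fix f assume "f \<notin> Hinf_disk" then show "psiC \<phi> f = 0" by (simp add: psiC_def)
qed

lemma ch_zero: "\<phi> \<in> characters Hinf_DN oneDN \<Longrightarrow> \<phi> (\<lambda>x. 0) = 0"
proof -
  assume p: "\<phi> \<in> characters Hinf_DN oneDN"
  have "\<phi> (\<lambda>x. 0 * oneDN x) = 0 * \<phi> oneDN" by (rule ch_smult[OF p DN_one])
  then show ?thesis by simp
qed

lemma schwarz_pick_le:
  assumes hol: "p holomorphic_on ball 0 1" and bd: "\<And>\<mu>. \<mu> \<in> ball 0 1 \<Longrightarrow> cmod (p \<mu>) \<le> 1"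
    and z: "p l0 = 0" and l: "l \<in> ball 0 1" and l0: "l0 \<in> ball 0 1"
  shows "cmod (p l) \<le> cmod (Moebius_function 0 l0 l)"
proof -
  define s where "s = Moebius_function 0 l0 l"
  have s1: "norm s < 1" unfolding s_def using Moebius_function_norm_lt_1 l l0 by auto
  have ml: "Moebius_function 0 (-l0) s = l"
    unfolding s_def by (rule Moebius_function_compose) (use l l0 in auto)
  have rle: "r * cmod (p l) \<le> cmod s" if r: "0 < r" "r < 1" for r
  proof -
    define q where "q = (\<lambda>t. r * p (Moebius_function 0 (-l0) t))"
    have mh: "Moebius_function 0 (-l0) holomorphic_on ball 0 1"
      by (rule Moebius_function_holomorphic) (use l0 in auto)
    have mb: "Moebius_function 0 (-l0) ` ball 0 1 \<subseteq> ball 0 1"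
      using Moebius_function_norm_lt_1 l0 by auto
    have "(p \<circ> Moebius_function 0 (-l0)) holomorphic_on ball 0 1"
      by (rule holomorphic_on_compose_gen[OF mh hol mb])
    then have qh: "q holomorphic_on ball 0 1"
      unfolding q_def o_def by (intro holomorphic_intros)
    have q0: "q 0 = 0" by (simp add: q_def Moebius_function_of_zero z)
    have qb: "norm (q t) < 1" if "norm t < 1" for t
    proof -
      have "t \<in> ball 0 1" using that by simp
      then have "Moebius_function 0 (-l0) t \<in> ball 0 1" using mb by blast
      then have "cmod (p (Moebius_function 0 (-l0) t)) \<le> 1" by (rule bd)
      then have "r * cmod (p (Moebius_function 0 (-l0) t)) \<le> r * 1"
        using r by (intro mult_left_mono) auto
      then have "r * cmod (p (Moebius_function 0 (-l0) t)) < 1" using r by linarith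
      then show ?thesis using r by (simp add: q_def norm_mult)
    qed
    have "norm (q s) \<le> norm s" by (rule Schwarz_Lemma(1)[OF qh q0 qb s1])
    then show ?thesis using r by (simp add: q_def ml norm_mult)
  qed
  show ?thesis
  proof (rule ccontr)
    assume "\<not> ?thesis"
    then have gt: "cmod s < cmod (p l)" by (simp add: s_def)
    define r where "r = (cmod (p l) + cmod s) / (2 * cmod (p l))"
    have pos: "0 < cmod (p l)" using gt by (smt (verit) norm_ge_zero)
    have "0 < r" "r < 1" using gt pos by (auto simp: r_def divide_simps intro: add_pos_nonneg)
    from rle[OF this] have "r * cmod (p l) \<le> cmod s" .
    moreover have "r * cmod (p l) = (cmod (p l) + cmod s) / 2" using pos by (simp add: r_def)
    ultimately show False using gt by simp
  qed
qed

lemma gleason_const: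
  assumes Tch: "\<And>\<mu>. \<mu> \<in> ball 0 1 \<Longrightarrow> \<tau> \<mu> \<in> characters Hinf_DN oneDN"
    and Thol: "\<And>h. h \<in> Hinf_DN \<Longrightarrow> (\<lambda>\<mu>. \<tau> \<mu> h) holomorphic_on ball 0 1"
    and l: "l \<in> ball 0 1" and l0: "l0 \<in> ball 0 1"
    and Ms: "psiC (\<tau> l0) \<in> M_s"
  shows "psiC (\<tau> l) = psiC (\<tau> l0)"
proof -
  define c where "c = cmod (Moebius_function 0 l0 l)"
  have c1: "c < 1" unfolding c_def using Moebius_function_norm_lt_1 l l0 by auto
  define S where "S = {cmod (psiC (\<tau> l) f) | f. f \<in> Hinf_disk \<and> psiC (\<tau> l0) f = 0 \<and> (\<forall>w\<in>ball 0 1. cmod (f w) \<le> 1)}"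
  have "0 \<in> S" unfolding S_def using disk_zero_fun
    by (intro CollectI exI[of _ "\<lambda>w. 0"]) (auto simp: psiC_def ch_zero[OF Tch[OF l]] ch_zero[OF Tch[OF l0]])
  have "x \<le> c" if "x \<in> S" for x
  proof -
    obtain f where f: "f \<in> Hinf_disk" and f0: "psiC (\<tau> l0) f = 0" and f1: "\<forall>w\<in>ball 0 1. cmod (f w) \<le> 1"
      and x: "x = cmod (psiC (\<tau> l) f)"
      using \<open>x \<in> S\<close> unfolding S_def by blast
    define p where "p = (\<lambda>\<mu>. \<tau> \<mu> (\<lambda>x. f (snd x)))"
    have "cmod (p l) \<le> c" unfolding c_def
    proof (rule schwarz_pick_le[OF _ _ _ l l0])
      show "p holomorphic_on ball 0 1" unfolding p_def by (rule Thol[OF disk_DN[OF f]])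
      show "cmod (p \<mu>) \<le> 1" if "\<mu> \<in> ball 0 1" for \<mu>
        unfolding p_def by (rule ch_bound[OF Tch[OF that] disk_DN[OF f]]) (use f1 in auto)
      show "p l0 = 0" using f0 f by (simp add: p_def psiC_def)
    qed
    then show ?thesis using x f by (simp add: p_def psiC_def)
  qed
  then have "Sup S \<le> c" using \<open>0 \<in> S\<close> by (intro cSup_least) auto
  then have "rho (psiC (\<tau> l0)) (psiC (\<tau> l)) < 1" using c1 unfolding rho_def S_def by simp
  then have "psiC (\<tau> l) \<in> gleason_part (psiC (\<tau> l0))"
    unfolding gleason_part_def using psiC_M[OF Tch[OF l]] by simp
  moreover have "psiC (\<tau> l0) \<notin> M_a" "psiC (\<tau> l0) \<in> M_disk" using Ms unfolding M_s_def by auto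
  ultimately show ?thesis unfolding M_a_def by blast
qed



lemma pd_upd:
  assumes "z \<in> polydisk (n - 1)" "1 \<le> n" "w \<in> ball 0 1"
  shows "z(n - 1 := w) \<in> polydisk n"
  using assms unfolding polydisk_def by auto

lemma poly_memD:
  assumes "f \<in> Hinf_poly n"
  obtains M where "\<And>x. cmod (f x) \<le> M"
proof -
  from assms obtain M where M: "\<And>x. x \<in> polydisk n \<Longrightarrow> cmod (f x) \<le> M"
    unfolding Hinf_poly_def bounded_iff by fastforce
  have "cmod (f x) \<le> max M 0" for x
  proof (cases "x \<in> polydisk n")
    case True then show ?thesis using M[of x] by simp
  next
    case False then show ?thesis using assms unfolding Hinf_poly_def by simp
  qed
  then show ?thesis using that by blast
qed

lemma poly_memI:
  assumes "continuous_on (polydisk n) f"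
    "\<And>z i. z \<in> polydisk n \<Longrightarrow> i < n \<Longrightarrow> (\<lambda>w. f (z(i := w))) holomorphic_on ball 0 1"
    "\<And>x. cmod (f x) \<le> M" "\<And>z. z \<notin> polydisk n \<Longrightarrow> f z = 0"
  shows "f \<in> Hinf_poly n"
  unfolding Hinf_poly_def bounded_iff using assms by fastforce

lemma poly_cont: "f \<in> Hinf_poly n \<Longrightarrow> continuous_on (polydisk n) f"
  and poly_hol: "f \<in> Hinf_poly n \<Longrightarrow> z \<in> polydisk n \<Longrightarrow> i < n \<Longrightarrow> (\<lambda>w. f (z(i := w))) holomorphic_on ball 0 1"
  and poly_zero: "f \<in> Hinf_poly n \<Longrightarrow> z \<notin> polydisk n \<Longrightarrow> f z = 0"
  unfolding Hinf_poly_def by auto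

lemma poly_add: "f \<in> Hinf_poly n \<Longrightarrow> g \<in> Hinf_poly n \<Longrightarrow> (\<lambda>x. f x + g x) \<in> Hinf_poly n"
proof -
  assume f: "f \<in> Hinf_poly n" and g: "g \<in> Hinf_poly n"
  obtain A where A: "\<And>w. cmod (f w) \<le> A" using poly_memD[OF f] by blast
  obtain B where B: "\<And>w. cmod (g w) \<le> B" using poly_memD[OF g] by blast
  show ?thesis
  proof (rule poly_memI[where M="A+B"])
    show "continuous_on (polydisk n) (\<lambda>x. f x + g x)"
      using poly_cont[OF f] poly_cont[OF g] by (intro continuous_intros)
    show "(\<lambda>w. f (z(i := w)) + g (z(i := w))) holomorphic_on ball 0 1" if "z \<in> polydisk n" "i < n" for z i
      using poly_hol[OF f that] poly_hol[OF g that] by (intro holomorphic_on_add)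
    show "cmod (f w + g w) \<le> A + B" for w
      using A[of w] B[of w] norm_triangle_ineq[of "f w" "g w"] by linarith
  qed (simp add: poly_zero[OF f] poly_zero[OF g])
qed

lemma poly_mult: "f \<in> Hinf_poly n \<Longrightarrow> g \<in> Hinf_poly n \<Longrightarrow> (\<lambda>x. f x * g x) \<in> Hinf_poly n"
proof -
  assume f: "f \<in> Hinf_poly n" and g: "g \<in> Hinf_poly n"
  obtain A where A: "\<And>w. cmod (f w) \<le> A" using poly_memD[OF f] by blast
  obtain B where B: "\<And>w. cmod (g w) \<le> B" using poly_memD[OF g] by blast
  show ?thesis
  proof (rule poly_memI[where M="A*B"])
    show "continuous_on (polydisk n) (\<lambda>x. f x * g x)"
      using poly_cont[OF f] poly_cont[OF g] by (intro continuous_intros)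
    show "(\<lambda>w. f (z(i := w)) * g (z(i := w))) holomorphic_on ball 0 1" if "z \<in> polydisk n" "i < n" for z i
      using poly_hol[OF f that] poly_hol[OF g that] by (intro holomorphic_on_mult)
    show "cmod (f w * g w) \<le> A * B" for w
      using A[of w] B[of w] by (simp add: norm_mult mult_mono')
  qed (simp add: poly_zero[OF f])
qed

lemma poly_smult: "f \<in> Hinf_poly n \<Longrightarrow> (\<lambda>x. c * f x) \<in> Hinf_poly n"
proof -
  assume f: "f \<in> Hinf_poly n"
  obtain A where A: "\<And>w. cmod (f w) \<le> A" using poly_memD[OF f] by blast
  show ?thesis
  proof (rule poly_memI[where M="cmod c*A"])
    show "continuous_on (polydisk n) (\<lambda>x. c * f x)"
      using poly_cont[OF f] by (intro continuous_intros)
    show "(\<lambda>w. c * f (z(i := w))) holomorphic_on ball 0 1" if "z \<in> polydisk n" "i < n" for z i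
      using poly_hol[OF f that] by (intro holomorphic_on_mult holomorphic_on_const)
    show "cmod (c * f w) \<le> cmod c * A" for w
      using A[of w] by (simp add: norm_mult mult_left_mono)
  qed (simp add: poly_zero[OF f])
qed

lemma Rop_DN:
  assumes f: "f \<in> Hinf_poly n" and zk: "\<And>k. z k \<in> polydisk (n - 1)" and n: "1 \<le> n"
  shows "Rop n z f \<in> Hinf_DN"
proof -
  obtain M where M: "\<And>x. cmod (f x) \<le> M" using poly_memD[OF f] by blast
  show ?thesis
  proof (rule DN_memI[where M=M])
    fix k
    have y: "(z k)(n - 1 := 0) \<in> polydisk n" by (rule pd_upd[OF zk n]) simp
    have "n - 1 < n" using n by simp
    from poly_hol[OF f y this]
    have "(\<lambda>w. f ((z k)(n - 1 := w))) holomorphic_on ball 0 1" by simp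
    then show "(\<lambda>w. Rop n z f (k, w)) holomorphic_on ball 0 1"
      by (rule holomorphic_transform) (simp add: Rop_def)
  qed (auto simp: Rop_def M)
qed

lemma Rstar_M:
  assumes phi: "\<phi> \<in> characters Hinf_DN oneDN" and zk: "\<And>k. z k \<in> polydisk (n - 1)" and n: "1 \<le> n"
  shows "Rstar n z \<phi> \<in> M_poly n"
  unfolding M_poly_def characters_def
proof (intro CollectI conjI ballI allI impI)
  fix f g assume f: "f \<in> Hinf_poly n" and g: "g \<in> Hinf_poly n"
  have ea: "Rop n z (\<lambda>x. f x + g x) = (\<lambda>x. Rop n z f x + Rop n z g x)"
    by (auto simp: Rop_def fun_eq_iff)
  have em: "Rop n z (\<lambda>x. f x * g x) = (\<lambda>x. Rop n z f x * Rop n z g x)"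
    by (auto simp: Rop_def fun_eq_iff)
  show "Rstar n z \<phi> (\<lambda>x. f x + g x) = Rstar n z \<phi> f + Rstar n z \<phi> g"
    using ch_add[OF phi Rop_DN[OF f zk n] Rop_DN[OF g zk n]] f g poly_add[OF f g] ea
    by (simp add: Rstar_def)
  show "Rstar n z \<phi> (\<lambda>x. f x * g x) = Rstar n z \<phi> f * Rstar n z \<phi> g"
    using ch_mult[OF phi Rop_DN[OF f zk n] Rop_DN[OF g zk n]] f g poly_mult[OF f g] em
    by (simp add: Rstar_def)
next
  fix c f assume f: "f \<in> Hinf_poly n"
  have es: "Rop n z (\<lambda>x. c * f x) = (\<lambda>x. c * Rop n z f x)"
    by (auto simp: Rop_def fun_eq_iff)
  show "Rstar n z \<phi> (\<lambda>x. c * f x) = c * Rstar n z \<phi> f"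
    using ch_smult[OF phi Rop_DN[OF f zk n]] f poly_smult[OF f] es by (simp add: Rstar_def)
next
  have i: "indicator (polydisk n) \<in> Hinf_poly n"
  proof (rule poly_memI[where M=1])
    show "continuous_on (polydisk n) (indicator (polydisk n) :: _ \<Rightarrow> complex)"
      by (rule continuous_on_cong[THEN iffD2, OF refl _ continuous_on_const[of _ 1]])
         (simp add: indicator_def)
    show "(\<lambda>w. indicator (polydisk n) (y(i := w)) :: complex) holomorphic_on ball 0 1"
      if "y \<in> polydisk n" "i < n" for y i
      by (rule holomorphic_transform[of "\<lambda>w. 1"]) (use that in \<open>auto simp: polydisk_def indicator_def\<close>)
  qed (auto simp: indicator_def)
  have "Rop n z (indicator (polydisk n)) = oneDN"
  proof
    fix x :: "nat \<times> complex" obtain k w where x: "x = (k, w)" by fastforce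
    show "Rop n z (indicator (polydisk n)) x = oneDN x"
      using pd_upd[OF zk[of k] n, of w] by (auto simp: x Rop_def indicator_def)
  qed
  then show "Rstar n z \<phi> (indicator (polydisk n)) = 1" using i ch_one[OF phi] by (simp add: Rstar_def)
next
  fix f assume "f \<notin> Hinf_poly n" then show "Rstar n z \<phi> f = 0" by (simp add: Rstar_def)
qed

lemma iota_poly:
  assumes f: "f \<in> Hinf_disk" and j: "j < n"
  shows "iota n j f \<in> Hinf_poly n"
proof -
  obtain M where M: "\<And>w. cmod (f w) \<le> M" using disk_memD[OF f] by blast
  show ?thesis
  proof (rule poly_memI[where M=M])
    have "continuous_on (polydisk n) (\<lambda>x. f (x j))"
    proof (rule continuous_on_compose2[of "ball 0 1" f])
      show "continuous_on (ball 0 1) f" by (rule holomorphic_on_imp_continuous_on[OF disk_hol[OF f]])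
      show "continuous_on (polydisk n) (\<lambda>x. x j)"
        by (rule continuous_on_subset[OF continuous_on_product_coordinates]) simp
      show "(\<lambda>x. x j) ` polydisk n \<subseteq> ball 0 1" using j by (auto simp: polydisk_def)
    qed
    then show "continuous_on (polydisk n) (iota n j f)"
      by (rule continuous_on_cong[THEN iffD1, rotated 2]) (auto simp: iota_def)
    show "(\<lambda>w. iota n j f (y(i := w))) holomorphic_on ball 0 1" if y: "y \<in> polydisk n" "i < n" for y i
    proof (cases "i = j")
      case True
      show ?thesis
        by (rule holomorphic_transform[OF disk_hol[OF f]])
           (use y True in \<open>auto simp: iota_def polydisk_def\<close>)
    next
      case False
      show ?thesis
        by (rule holomorphic_transform[of "\<lambda>w. f (y j)"])
           (use y False in \<open>auto simp: iota_def polydisk_def\<close>)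
    qed
  qed (use order_trans[OF norm_ge_zero M[of 0]] in \<open>auto simp: iota_def M\<close>)
qed

lemma Rop_iota_lt:
  assumes zk: "\<And>k. z k \<in> polydisk (n - 1)" and n: "1 \<le> n" and j: "j < n - 1"
  shows "Rop n z (iota n j f) = seqfun (\<lambda>k. f (z k j))"
proof
  fix x :: "nat \<times> complex" obtain k w where x: "x = (k, w)" by fastforce
  show "Rop n z (iota n j f) x = seqfun (\<lambda>k. f (z k j)) x"
    using pd_upd[OF zk[of k] n, of w] j by (auto simp: x Rop_def iota_def seqfun_def)
qed

lemma Rop_iota_last:
  assumes zk: "\<And>k. z k \<in> polydisk (n - 1)" and n: "1 \<le> n" and f: "f \<in> Hinf_disk"
  shows "Rop n z (iota n (n - 1) f) = (\<lambda>x. f (snd x))"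
proof
  fix x :: "nat \<times> complex" obtain k w where x: "x = (k, w)" by fastforce
  show "Rop n z (iota n (n - 1) f) x = f (snd x)"
    using pd_upd[OF zk[of k] n, of w] disk_zero[OF f, of w] by (auto simp: x Rop_def iota_def)
qed



theorem lemma5p2:
  fixes n :: nat
    and \<xi> :: "nat \<Rightarrow> (complex \<Rightarrow> complex) \<Rightarrow> complex"
    and z :: "nat \<Rightarrow> nat \<Rightarrow> complex"
    and G :: "((nat \<times> complex \<Rightarrow> complex) \<Rightarrow> complex) set"
    and \<eta> :: "((nat \<Rightarrow> complex) \<Rightarrow> complex) \<Rightarrow> complex"
  assumes "n \<ge> 2"
    and "\<xi> \<in> (\<Pi>\<^sub>E j\<in>{..<n}. M_disk)"
    and "\<forall>j<n - 1. \<xi> j \<in> M_a"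
    and "\<xi> (n - 1) \<in> M_s"
    and "\<forall>k. z k \<in> polydisk (n - 1)"
    and "\<exists>a :: nat \<Rightarrow> nat \<Rightarrow> complex. (\<forall>j<n - 1. interpolating_disk (a j)) \<and>
           range z = {w \<in> polydisk (n - 1). \<forall>j<n - 1. w j \<in> range (a j)}"
    and "interpolating_poly (n - 1) z"
    and "restrict \<xi> {..<n - 1} \<in>
           (product_topology (\<lambda>j. weakstar Hinf_disk M_disk) {..<n - 1})
             closure_of ((\<lambda>k. \<lambda>j\<in>{..<n - 1}. ev_disk (z k j)) ` UNIV)"
    and "analytic_disk Hinf_DN (indicator (UNIV \<times> ball 0 1)) G"
    and "\<eta> \<in> Rstar n z ` G"
    and "\<eta> \<in> fiber n \<xi>"
  shows "Rstar n z ` G \<subseteq> fiber n \<xi>"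
proof -
  have n: "1 \<le> n" using assms(1) by simp
  have zk: "\<And>k. z k \<in> polydisk (n - 1)" using assms(5) by blast
  from assms(9)[unfolded analytic_disk_def] obtain \<tau> where
    T: "\<tau> ` ball 0 1 \<subseteq> characters Hinf_DN oneDN
     \<and> inj_on \<tau> (ball 0 1)
     \<and> continuous_map (top_of_set (ball 0 1)) (weakstar Hinf_DN (characters Hinf_DN oneDN)) \<tau>
     \<and> (\<forall>f\<in>Hinf_DN. (\<lambda>z. \<tau> z f) holomorphic_on ball 0 1 \<and> bounded ((\<lambda>z. \<tau> z f) ` ball 0 1))
     \<and> G = \<tau> ` ball 0 1" by (rule exE)
  have Tim: "\<tau> ` ball 0 1 \<subseteq> characters Hinf_DN oneDN" using T by (elim conjE)
  have Thol': "\<forall>f\<in>Hinf_DN. (\<lambda>z. \<tau> z f) holomorphic_on ball 0 1" using T by (elim conjE) simp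
  have G: "G = \<tau> ` ball 0 1" using T by (elim conjE)
  have Tch: "\<And>\<mu>. \<mu> \<in> ball 0 1 \<Longrightarrow> \<tau> \<mu> \<in> characters Hinf_DN oneDN" using Tim by blast
  have Thol: "\<And>h. h \<in> Hinf_DN \<Longrightarrow> (\<lambda>\<mu>. \<tau> \<mu> h) holomorphic_on ball 0 1" using Thol' by blast
  obtain l0 where l0: "l0 \<in> ball 0 1" and eta: "\<eta> = Rstar n z (\<tau> l0)"
    using assms(10) G by blast
  have fib: "\<eta> \<in> M_poly n" "pi_n n \<eta> = \<xi>" using assms(11) unfolding fiber_def by auto
  have "n - 1 \<in> {..<n}" using n by simp
  then have xiM: "\<xi> (n - 1) \<in> M_disk" by (rule PiE_mem[OF assms(2)])
  have xi_last: "\<xi> (n - 1) = psiC (\<tau> l0)"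
  proof
    fix f
    show "\<xi> (n - 1) f = psiC (\<tau> l0) f"
    proof (cases "f \<in> Hinf_disk")
      case True
      have "\<xi> (n - 1) f = pi_n n \<eta> (n - 1) f" using fib by simp
      also have "\<dots> = \<eta> (iota n (n - 1) f)" using True n by (simp add: pi_n_def)
      also have "\<dots> = \<tau> l0 (\<lambda>x. f (snd x))"
        using iota_poly[OF True, of "n - 1" n] n Rop_iota_last[OF zk n True]
        by (simp add: eta Rstar_def)
      finally show ?thesis using True by (simp add: psiC_def)
    next
      case False
      then show ?thesis using ch_out[OF xiM[unfolded M_disk_def]] by (simp add: psiC_def)
    qed
  qed
  have Ms: "psiC (\<tau> l0) \<in> M_s" using assms(4) xi_last by simp
  show ?thesis
  proof
    fix \<psi> assume "\<psi> \<in> Rstar n z ` G"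
    then obtain l where l: "l \<in> ball 0 1" and psi: "\<psi> = Rstar n z (\<tau> l)" using G by blast
    have key: "Rstar n z (\<tau> l) (iota n j f) = Rstar n z (\<tau> l0) (iota n j f)"
      if j: "j < n" and f: "f \<in> Hinf_disk" for j f
    proof -
      have "\<tau> l (Rop n z (iota n j f)) = \<tau> l0 (Rop n z (iota n j f))"
      proof (cases "j < n - 1")
        case True
        obtain M where M: "\<And>w. cmod (f w) \<le> M" using disk_memD[OF f] by blast
        show ?thesis unfolding Rop_iota_lt[OF zk n True]
          by (rule seq_const[where \<tau>=\<tau> and c="\<lambda>k. f (z k j)" and B=M, OF Tch Thol M l l0])
      next
        case False
        then have jj: "j = n - 1" using j by simp
        have "psiC (\<tau> l) = psiC (\<tau> l0)"
          by (rule gleason_const[where \<tau>=\<tau>, OF Tch Thol l l0 Ms])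
        then have "psiC (\<tau> l) f = psiC (\<tau> l0) f" by simp
        then show ?thesis unfolding jj Rop_iota_last[OF zk n f] using f by (simp add: psiC_def)
      qed
      then show ?thesis by (simp add: Rstar_def)
    qed
    have "pi_n n \<psi> = pi_n n \<eta>"
      unfolding pi_n_def psi eta
    proof (rule restrict_ext, rule ext)
      fix j f assume "j \<in> {..<n}"
      then have j: "j < n" by simp
      show "(if f \<in> Hinf_disk then Rstar n z (\<tau> l) (iota n j f) else 0) =
            (if f \<in> Hinf_disk then Rstar n z (\<tau> l0) (iota n j f) else 0)"
        using key[OF j] by (cases "f \<in> Hinf_disk") simp_all
    qed
    then have "pi_n n \<psi> = \<xi>" using fib by simp
    moreover have "\<psi> \<in> M_poly n" unfolding psi by (rule Rstar_M[OF Tch[OF l] zk n])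
    ultimately show "\<psi> \<in> fiber n \<xi>" unfolding fiber_def by simp
  qed
qed


end
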